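(* Let $N\ge 2$, let $s=(s_1,\dots,s_{N-1})\in\mathbb{C}^{N-1}$ be generic, and set $x_a=2s_a-2s_{a-1}$ for $1\le a\le N$, with $s_0=s_N=0$. Define $$F(s)=\mathbb{1}\otimes\mathbb{1}-\sum_{1\le a<b\le N}\frac{2}{x_a-x_b}\,E_{ab}\otimes E_{ba}\in \mathrm{End}(\mathbb{C}^N)^{\otimes 2},$$ and $R(s)=F_{21}(s)\,F_{12}(s)^{-1}$, where $F_{21}=PF_{12}P$ with $P$ the permutation of the two tensor factors. Then, writing $R(s)=\sum R_{i_1i_2}^{j_1j_2}E_{i_1j_1}\otimes E_{i_2j_2}$, the non-vanishing entries of $R(s)$ are, for $1\le a, b\le N$ with $a\neq b$ in the last two lines, $$R_{aa}^{aa}=1,\qquad R_{ab}^{ab}=\begin{cases}1 & b>a,\\ 1-\dfrac{4}{(x_a-x_b)^2} & b<a,\end{cases}\qquad R_{ab}^{ba}=\frac{2}{x_a-x_b},$$ and $R(s)$ satisfies the dynamical Yang--Baxter equation $$R_{12}(s+h^{(3)})\,R_{13}(s)\,R_{23}(s+h^{(1)})=R_{23}(s)\,R_{13}(s+h^{(2)})\,R_{12}(s)$$ in $\mathrm{End}(\mathbb{C}^N)^{\otimes 3}$.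
   Context: $E_{ab}$ denotes the $N\times N$ elementary matrix with entry $1$ in position $(a,b)$ and $0$ elsewhere; $R_{12},R_{13},R_{23}$ denote $R$ acting on the indicated factors of $(\mathbb{C}^N)^{\otimes 3}$. The shift notation: let $h_j=E_{jj}-E_{j+1,j+1}$ ($1\le j\le N-1$) be the Cartan generators of $sl_N$ in the fundamental representation, $(d_{ij})$ the inverse of the Cartan matrix of $sl_N$, and $h^\vee_i=\sum_j d_{ij}h_j$. Then $R_{12}(s+h^{(3)})$ means the operator obtained by replacing each $s_i$ in $R_{12}(s)$ by $s_i+h^\vee_i$ acting in the third tensor factor (these are diagonal, so this is well defined: on $v_{i_1}\otimes v_{i_2}\otimes v_c$ one substitutes the eigenvalue of $h^\vee_i$ on $v_c$); similarly for $h^{(1)}$, $h^{(2)}$. *)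

theory Defs
  imports Complex_Main
begin

definition cartan :: "nat \<Rightarrow> nat \<Rightarrow> real" where
  "cartan i j = (if i = j then 2 else if i = j + 1 \<or> j = i + 1 then -1 else 0)"

definition cartan_inv :: "nat \<Rightarrow> nat \<Rightarrow> nat \<Rightarrow> real" where
  "cartan_inv N = (THE d. (\<forall>i j. (i \<notin> {1..N-1} \<or> j \<notin> {1..N-1}) \<longrightarrow> d i j = 0) \<and>
      (\<forall>i\<in>{1..N-1}. \<forall>k\<in>{1..N-1}.
         (\<Sum>j\<in>{1..N-1}. cartan i j * d j k) = (if i = k then 1 else 0)))"

text \<open>Eigenvalue of h_j = E_jj - E_{j+1,j+1} on the basis vector v_c.\<close>
definition h_eig :: "nat \<Rightarrow> nat \<Rightarrow> real" where
  "h_eig j c = (if c = j then 1 else 0) - (if c = j + 1 then 1 else 0)"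

text \<open>Eigenvalue of h^vee_i = sum_j d_ij h_j on v_c.\<close>
definition hvee_eig :: "nat \<Rightarrow> nat \<Rightarrow> nat \<Rightarrow> real" where
  "hvee_eig N i c = (\<Sum>j\<in>{1..N-1}. cartan_inv N i j * h_eig j c)"

text \<open>s + h^vee evaluated on v_c: replace s_i by s_i + (eigenvalue of h^vee_i on v_c).\<close>
definition shift :: "nat \<Rightarrow> (nat \<Rightarrow> complex) \<Rightarrow> nat \<Rightarrow> (nat \<Rightarrow> complex)" where
  "shift N s c = (\<lambda>i. s i + complex_of_real (hvee_eig N i c))"

definition sext :: "nat \<Rightarrow> (nat \<Rightarrow> complex) \<Rightarrow> nat \<Rightarrow> complex" where
  "sext N s a = (if 1 \<le> a \<and> a \<le> N - 1 then s a else 0)"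

definition xcoord :: "nat \<Rightarrow> (nat \<Rightarrow> complex) \<Rightarrow> nat \<Rightarrow> complex" where
  "xcoord N s a = 2 * sext N s a - 2 * sext N s (a - 1)"

text \<open>Genericity: all denominators x_a - x_b (a /= b) occurring, at s and at all
  shifted points s + h^vee(v_c), are nonzero.\<close>
definition generic :: "nat \<Rightarrow> (nat \<Rightarrow> complex) \<Rightarrow> bool" where
  "generic N s = (\<forall>t \<in> insert s (shift N s ` {1..N}). \<forall>a\<in>{1..N}. \<forall>b\<in>{1..N}.
       a \<noteq> b \<longrightarrow> xcoord N t a \<noteq> xcoord N t b)"

type_synonym op2 = "nat \<times> nat \<Rightarrow> nat \<times> nat \<Rightarrow> complex"
type_synonym op3 = "nat \<times> nat \<times> nat \<Rightarrow> nat \<times> nat \<times> nat \<Rightarrow> complex"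

definition elem :: "nat \<Rightarrow> nat \<Rightarrow> nat \<Rightarrow> nat \<Rightarrow> complex" where
  "elem a b i j = (if i = a \<and> j = b then 1 else 0)"

definition idx2 :: "nat \<Rightarrow> (nat \<times> nat) set" where
  "idx2 N = {1..N} \<times> {1..N}"

definition idx3 :: "nat \<Rightarrow> (nat \<times> nat \<times> nat) set" where
  "idx3 N = {1..N} \<times> {1..N} \<times> {1..N}"

definition mult2 :: "nat \<Rightarrow> op2 \<Rightarrow> op2 \<Rightarrow> op2" where
  "mult2 N A B = (\<lambda>i j. \<Sum>k\<in>idx2 N. A i k * B k j)"

definition mult3 :: "nat \<Rightarrow> op3 \<Rightarrow> op3 \<Rightarrow> op3" where
  "mult3 N A B = (\<lambda>i j. \<Sum>k\<in>idx3 N. A i k * B k j)"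

definition one2 :: op2 where
  "one2 = (\<lambda>i j. if i = j then 1 else 0)"

definition inv2 :: "nat \<Rightarrow> op2 \<Rightarrow> op2" where
  "inv2 N A = (THE B. (\<forall>i j. (i \<notin> idx2 N \<or> j \<notin> idx2 N) \<longrightarrow> B i j = 0) \<and>
      (\<forall>i\<in>idx2 N. \<forall>j\<in>idx2 N. mult2 N A B i j = one2 i j \<and> mult2 N B A i j = one2 i j))"

definition perm2 :: op2 where
  "perm2 = (\<lambda>(i1, i2) (j1, j2). if i1 = j2 \<and> i2 = j1 then 1 else 0)"

definition Fmat :: "nat \<Rightarrow> (nat \<Rightarrow> complex) \<Rightarrow> op2" where
  "Fmat N s = (\<lambda>(i1, i2) (j1, j2).
      one2 (i1, i2) (j1, j2)
      - (\<Sum>a\<in>{1..N}. \<Sum>b\<in>{a<..N}.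
           2 / (xcoord N s a - xcoord N s b) * elem a b i1 j1 * elem b a i2 j2))"

definition Rmat :: "nat \<Rightarrow> (nat \<Rightarrow> complex) \<Rightarrow> op2" where
  "Rmat N s = mult2 N (mult2 N perm2 (mult2 N (Fmat N s) perm2)) (inv2 N (Fmat N s))"

definition R12_sh3 :: "nat \<Rightarrow> (nat \<Rightarrow> complex) \<Rightarrow> op3" where
  "R12_sh3 N s = (\<lambda>(i1, i2, i3) (j1, j2, j3).
      if i3 = j3 then Rmat N (shift N s i3) (i1, i2) (j1, j2) else 0)"

definition R13_sh2 :: "nat \<Rightarrow> (nat \<Rightarrow> complex) \<Rightarrow> op3" where
  "R13_sh2 N s = (\<lambda>(i1, i2, i3) (j1, j2, j3).
      if i2 = j2 then Rmat N (shift N s i2) (i1, i3) (j1, j3) else 0)"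

definition R23_sh1 :: "nat \<Rightarrow> (nat \<Rightarrow> complex) \<Rightarrow> op3" where
  "R23_sh1 N s = (\<lambda>(i1, i2, i3) (j1, j2, j3).
      if i1 = j1 then Rmat N (shift N s i1) (i2, i3) (j2, j3) else 0)"

definition R12 :: "nat \<Rightarrow> (nat \<Rightarrow> complex) \<Rightarrow> op3" where
  "R12 N s = (\<lambda>(i1, i2, i3) (j1, j2, j3).
      if i3 = j3 then Rmat N s (i1, i2) (j1, j2) else 0)"

definition R13 :: "nat \<Rightarrow> (nat \<Rightarrow> complex) \<Rightarrow> op3" where
  "R13 N s = (\<lambda>(i1, i2, i3) (j1, j2, j3).
      if i2 = j2 then Rmat N s (i1, i3) (j1, j3) else 0)"

definition R23 :: "nat \<Rightarrow> (nat \<Rightarrow> complex) \<Rightarrow> op3" where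
  "R23 N s = (\<lambda>(i1, i2, i3) (j1, j2, j3).
      if i1 = j1 then Rmat N s (i2, i3) (j2, j3) else 0)"

end

theory Submission
  imports Defs
begin


definition dd :: "nat \<Rightarrow> nat \<Rightarrow> nat \<Rightarrow> real" where
  "dd N i j = (if i \<in> {1..N-1} \<and> j \<in> {1..N-1} then real (min i j) - real i * real j / real N else 0)"

lemma cartan_sum:
  assumes "i \<in> {1..N-1}"
  shows "(\<Sum>j\<in>{1..N-1}. cartan i j * g j) =
     2 * g i - (if i + 1 \<le> N - 1 then g (i+1) else 0) - (if 2 \<le> i then g (i - 1) else 0)"
proof -
  have "(\<Sum>j\<in>{1..N-1}. cartan i j * g j) = (\<Sum>j\<in>{1..N-1}.
      (if j = i then 2 * g i else 0) - (if j = i + 1 then g (i+1) else 0) - (if 2 \<le> i then (if j = i - 1 then g (i - 1) else 0) else 0))"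
    by (rule sum.cong) (auto simp: cartan_def)
  also have "\<dots> = (\<Sum>j\<in>{1..N-1}. (if j = i then 2 * g i else 0)) - (\<Sum>j\<in>{1..N-1}. (if j = i + 1 then g (i+1) else 0))
      - (\<Sum>j\<in>{1..N-1}. (if 2 \<le> i then (if j = i - 1 then g (i - 1) else 0) else 0))"
    by (simp add: sum_subtractf)
  also have "\<dots> = 2 * g i - (if i + 1 \<le> N - 1 then g (i+1) else 0) - (if 2 \<le> i then g (i - 1) else 0)"
    using assms by (auto simp: sum.delta')
  finally show ?thesis .
qed


lemma dd_prop:
  assumes "i \<in> {1..N-1}" "k \<in> {1..N-1}"
  shows "(\<Sum>j\<in>{1..N-1}. cartan i j * dd N j k) = (if i = k then 1 else 0)"
proof -
  have N: "N \<ge> 2" using assms by auto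
  have "(\<Sum>j\<in>{1..N-1}. cartan i j * dd N j k) =
     2 * dd N i k - (if i + 1 \<le> N - 1 then dd N (i+1) k else 0) - (if 2 \<le> i then dd N (i - 1) k else 0)"
    by (rule cartan_sum[OF assms(1)])
  also have "\<dots> = 2 * (real (min i k) - real i * real k / real N)
     - (real (min (i+1) k) - real (i+1) * real k / real N)
     - (real (min (i-1) k) - real (i-1) * real k / real N)"
  proof -
    have a: "(if i + 1 \<le> N - 1 then dd N (i+1) k else 0) = real (min (i+1) k) - real (i+1) * real k / real N"
    proof (cases "i + 1 \<le> N - 1")
      case True then show ?thesis using assms by (simp add: dd_def)
    next
      case False then have "i + 1 = N" using assms by auto
      then show ?thesis using assms N by (auto simp: min_def)
    qed
    have b: "(if 2 \<le> i then dd N (i - 1) k else 0) = real (min (i-1) k) - real (i-1) * real k / real N"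
    proof (cases "2 \<le> i")
      case True
      then have "i - 1 \<in> {1..N-1}" using assms by auto
      then show ?thesis using True assms by (simp add: dd_def of_nat_diff)
    next
      case False then have "i = 1" using assms by auto
      then show ?thesis using assms by (auto simp: min_def)
    qed
    show ?thesis using a b assms by (simp add: dd_def)
  qed
  also have "\<dots> = 2 * real (min i k) - real (min (i+1) k) - real (min (i-1) k)"
    using assms N by (simp add: of_nat_diff divide_simps) (simp add: algebra_simps)
  also have "\<dots> = (if i = k then 1 else 0)"
    using assms by (auto simp: min_def of_nat_diff)
  finally show ?thesis .
qed

lemma dd_sym: "dd N i j = dd N j i"
  by (auto simp: dd_def min.commute mult.commute)

lemma cartan_sym: "cartan i j = cartan j i"
  by (auto simp: cartan_def)

lemma dd_unique:
  assumes z: "\<forall>i j. (i \<notin> {1..N-1} \<or> j \<notin> {1..N-1}) \<longrightarrow> d i j = 0"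
  and p: "\<forall>i\<in>{1..N-1}. \<forall>k\<in>{1..N-1}. (\<Sum>j\<in>{1..N-1}. cartan i j * d j k) = (if i = k then 1 else 0)"
  shows "d = dd N"
proof (intro ext)
  fix j k
  show "d j k = dd N j k"
  proof (cases "j \<in> {1..N-1} \<and> k \<in> {1..N-1}")
    case False then show ?thesis using z by (auto simp: dd_def)
  next
    case True
    have "d j k = (\<Sum>l\<in>{1..N-1}. if j = l then d l k else 0)"
      using True by (simp add: sum.delta)
    also have "\<dots> = (\<Sum>l\<in>{1..N-1}. (if j = l then 1 else 0) * d l k)"
      by (rule sum.cong) auto
    also have "\<dots> = (\<Sum>l\<in>{1..N-1}. (\<Sum>i\<in>{1..N-1}. dd N j i * cartan i l) * d l k)"
    proof (rule sum.cong)
      fix l assume l: "l \<in> {1..N-1}"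
      have "(\<Sum>i\<in>{1..N-1}. dd N j i * cartan i l) = (\<Sum>i\<in>{1..N-1}. cartan l i * dd N i j)"
        by (rule sum.cong) (auto simp: dd_sym cartan_sym)
      also have "\<dots> = (if l = j then 1 else 0)" using dd_prop l True by blast
      finally show "(if j = l then 1 else 0) * d l k = (\<Sum>i\<in>{1..N-1}. dd N j i * cartan i l) * d l k"
        by auto
    qed simp
    also have "\<dots> = (\<Sum>i\<in>{1..N-1}. dd N j i * (\<Sum>l\<in>{1..N-1}. cartan i l * d l k))"
      by (simp add: sum_distrib_left sum_distrib_right mult.assoc) (rule sum.swap)
    also have "\<dots> = (\<Sum>i\<in>{1..N-1}. dd N j i * (if i = k then 1 else 0))"
      using p True by (intro sum.cong) auto
    also have "\<dots> = dd N j k" using True by (simp add: if_distrib sum.delta' cong: if_cong)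
    finally show ?thesis .
  qed
qed

lemma cartan_inv_eq: "cartan_inv N = dd N"
  unfolding cartan_inv_def
proof (rule the_equality)
  show "(\<forall>i j. (i \<notin> {1..N-1} \<or> j \<notin> {1..N-1}) \<longrightarrow> dd N i j = 0) \<and>
      (\<forall>i\<in>{1..N-1}. \<forall>k\<in>{1..N-1}. (\<Sum>j\<in>{1..N-1}. cartan i j * dd N j k) = (if i = k then 1 else 0))"
    using dd_prop by (auto simp: dd_def)
next
  fix d assume "(\<forall>i j. (i \<notin> {1..N-1} \<or> j \<notin> {1..N-1}) \<longrightarrow> d i j = 0) \<and>
      (\<forall>i\<in>{1..N-1}. \<forall>k\<in>{1..N-1}. (\<Sum>j\<in>{1..N-1}. cartan i j * d j k) = (if i = k then 1 else 0))"
  then show "d = dd N" using dd_unique by blast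
qed


lemma hvee_eq:
  assumes i: "i \<in> {1..N-1}" and c: "c \<in> {1..N}"
  shows "hvee_eig N i c = (if c \<le> i then 1 else 0) - real i / real N"
proof -
  have "hvee_eig N i c = (\<Sum>j\<in>{1..N-1}. (if j = c then dd N i j else 0) - (if j = c - 1 \<and> c \<ge> 1 then dd N i j else 0))"
    unfolding hvee_eig_def cartan_inv_eq
    by (rule sum.cong) (auto simp: h_eig_def)
  also have "\<dots> = dd N i c - dd N i (c - 1)"
    using c by (simp add: sum_subtractf sum.delta') (auto simp: dd_def)
  also have "\<dots> = (if c \<le> i then 1 else 0) - real i / real N"
    using i c by (cases "c = 1") (auto simp: dd_def min_def of_nat_diff divide_simps algebra_simps)
  finally show ?thesis .
qed

lemma xshift:
  assumes N: "N \<ge> 2" and a: "a \<in> {1..N}" and c: "c \<in> {1..N}"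
  shows "xcoord N (shift N s c) a = xcoord N s a + 2 * (if a = c then 1 else 0) - 2 / of_nat N"
proof -
  define e where "e p = (if 1 \<le> p \<and> p \<le> N - 1 then complex_of_real ((if c \<le> p then 1 else 0) - real p / real N) else 0)" for p
  have se: "sext N (shift N s c) p = sext N s p + e p" for p
    using c by (auto simp: sext_def shift_def e_def hvee_eq)
  have "xcoord N (shift N s c) a = xcoord N s a + 2 * e a - 2 * e (a - 1)"
    unfolding xcoord_def se by (simp add: algebra_simps)
  moreover have "2 * e a - 2 * e (a - 1) = 2 * (if a = c then 1 else 0) - 2 / of_nat N"
  proof -
    have Nc: "complex_of_real (real N) \<noteq> 0" using N by simp
    consider "a = 1" | "a = N" | "1 < a \<and> a < N" using a N by force
    then show ?thesis
    proof cases
      case 1 then show ?thesis using N c by (auto simp: e_def divide_simps)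
    next
      case 2 then show ?thesis using N c
        by (auto simp: e_def divide_simps of_nat_diff)
    next
      case 3 then show ?thesis using N c
        by (auto simp: e_def divide_simps of_nat_diff)
    qed
  qed
  ultimately show ?thesis by simp
qed



definition cc :: "(nat \<Rightarrow> complex) \<Rightarrow> nat \<Rightarrow> nat \<Rightarrow> complex" where
  "cc x p q = (if p < q then 2 / (x p - x q) else 0)"
definition ra :: "(nat \<Rightarrow> complex) \<Rightarrow> nat \<Rightarrow> nat \<Rightarrow> complex" where
  "ra x p q = 1 - (cc x q p)^2"
definition rb :: "(nat \<Rightarrow> complex) \<Rightarrow> nat \<Rightarrow> nat \<Rightarrow> complex" where
  "rb x p q = cc x p q - cc x q p"

lemma sum_sparse:
  fixes A B :: "'k \<Rightarrow> complex"
  assumes "finite S" "p \<in> S" "q \<in> S" "\<And>k. A k = (if k = p then \<alpha> else 0) + (if k = q then \<beta> else 0)"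
  shows "(\<Sum>k\<in>S. A k * B k) = \<alpha> * B p + \<beta> * B q"
proof -
  have "(\<Sum>k\<in>S. A k * B k) = (\<Sum>k\<in>S. (if k = p then \<alpha> * B k else 0) + (if k = q then \<beta> * B k else 0))"
    using assms(4) by (intro sum.cong) (auto simp: algebra_simps)
  also have "\<dots> = \<alpha> * B p + \<beta> * B q" using assms by (simp add: sum.distrib sum.delta')
  finally show ?thesis .
qed

lemma mult2_sparse:
  assumes "p \<in> idx2 N" "q \<in> idx2 N" "\<And>k. A i k = (if k = p then \<alpha> else 0) + (if k = q then \<beta> else 0)"
  shows "mult2 N A B i j = \<alpha> * B p j + \<beta> * B q j"
  unfolding mult2_def using assms by (intro sum_sparse) (auto simp: idx2_def)

lemma Fmat_eq:
  "Fmat N s (i1, i2) (j1, j2) = one2 (i1, i2) (j1, j2)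
     - (if i1 \<in> {1..N} \<and> i2 \<in> {1..N} \<and> j1 = i2 \<and> j2 = i1 then cc (xcoord N s) i1 i2 else 0)"
proof -
  have "(\<Sum>a\<in>{1..N}. \<Sum>b\<in>{a<..N}.
           2 / (xcoord N s a - xcoord N s b) * elem a b i1 j1 * elem b a i2 j2)
     = (\<Sum>a\<in>{1..N}. if a = i1 then (\<Sum>b\<in>{a<..N}. if b = i2 then 
          (if j1 = i2 \<and> j2 = i1 then 2 / (xcoord N s a - xcoord N s b) else 0) else 0) else 0)"
  proof (intro sum.cong refl)
    fix a assume "a \<in> {1..N}"
    have "(\<Sum>b\<in>{a<..N}. 2 / (xcoord N s a - xcoord N s b) * elem a b i1 j1 * elem b a i2 j2)
      = (\<Sum>b\<in>{a<..N}. if b = i2 then (if a = i1 \<and> j1 = i2 \<and> j2 = i1 then 2 / (xcoord N s a - xcoord N s b) else 0) else 0)"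
      by (intro sum.cong) (auto simp: elem_def)
    then show "(\<Sum>b\<in>{a<..N}. 2 / (xcoord N s a - xcoord N s b) * elem a b i1 j1 * elem b a i2 j2) =
       (if a = i1 then (\<Sum>b\<in>{a<..N}. if b = i2 then 
          (if j1 = i2 \<and> j2 = i1 then 2 / (xcoord N s a - xcoord N s b) else 0) else 0) else 0)"
      by (auto simp: sum.delta')
  qed
  also have "\<dots> = (if i1 \<in> {1..N} \<and> i2 \<in> {1..N} \<and> j1 = i2 \<and> j2 = i1 then cc (xcoord N s) i1 i2 else 0)"
    by (auto simp: sum.delta' cc_def)
  finally show ?thesis unfolding Fmat_def by simp
qed


definition Gmat :: "nat \<Rightarrow> (nat \<Rightarrow> complex) \<Rightarrow> op2" where
  "Gmat N s = (\<lambda>(i1, i2) (j1, j2). if (i1, i2) \<in> idx2 N \<and> (j1, j2) \<in> idx2 N then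
      one2 (i1, i2) (j1, j2) + (if (j1, j2) = (i2, i1) then cc (xcoord N s) i1 i2 else 0) else 0)"

lemma F_row: "(i1, i2) \<in> idx2 N \<Longrightarrow> Fmat N s (i1, i2) k =
   (if k = (i1, i2) then 1 else 0) + (if k = (i2, i1) then - cc (xcoord N s) i1 i2 else 0)"
proof -
  assume i: "(i1, i2) \<in> idx2 N"
  obtain k1 k2 where k: "k = (k1, k2)" by (cases k)
  show ?thesis unfolding k Fmat_eq one2_def using i
    by (cases "k1 = i1"; cases "k2 = i2"; cases "k1 = i2"; cases "k2 = i1") (auto simp: idx2_def)
qed

lemma G_row: "(i1, i2) \<in> idx2 N \<Longrightarrow> Gmat N s (i1, i2) k =
   (if k = (i1, i2) then 1 else 0) + (if k = (i2, i1) then cc (xcoord N s) i1 i2 else 0)"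
proof -
  assume i: "(i1, i2) \<in> idx2 N"
  obtain k1 k2 where k: "k = (k1, k2)" by (cases k)
  show ?thesis unfolding k Gmat_def one2_def using i
    by (cases "k1 = i1"; cases "k2 = i2"; cases "k1 = i2"; cases "k2 = i1") (auto simp: idx2_def)
qed

lemma P_row: "perm2 (i1, i2) k = (if k = (i1, i2) then 0 else 0) + (if k = (i2, i1) then 1 else 0)"
  by (cases k) (auto simp: perm2_def)

lemma swap_idx2: "(i1, i2) \<in> idx2 N \<Longrightarrow> (i2, i1) \<in> idx2 N"
  by (auto simp: idx2_def)

lemma cc_prod: "cc x p q * cc x q p = 0"
  by (auto simp: cc_def)

lemma FG: "i \<in> idx2 N \<Longrightarrow> j \<in> idx2 N \<Longrightarrow> mult2 N (Fmat N s) (Gmat N s) i j = one2 i j"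
proof -
  assume i: "i \<in> idx2 N" and j: "j \<in> idx2 N"
  obtain i1 i2 where ii: "i = (i1, i2)" by (cases i)
  obtain j1 j2 where jj: "j = (j1, j2)" by (cases j)
  have i': "(i1, i2) \<in> idx2 N" using i ii by simp
  have s: "(i2, i1) \<in> idx2 N" using i' swap_idx2 by auto
  have "mult2 N (Fmat N s) (Gmat N s) (i1, i2) j = 1 * Gmat N s (i1, i2) j + (- cc (xcoord N s) i1 i2) * Gmat N s (i2, i1) j"
    by (rule mult2_sparse[where A="Fmat N s" and i="(i1,i2)", OF i' s F_row[OF i']])
  also have "\<dots> = one2 (i1, i2) (j1, j2)"
    unfolding jj G_row[OF i'] G_row[OF s] one2_def
    using cc_prod[of "xcoord N s" i1 i2]
    by (cases "j1 = i1"; cases "j2 = i2"; cases "j1 = i2"; cases "j2 = i1") (simp_all add: algebra_simps)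
  finally show ?thesis unfolding ii jj .
qed

lemma GF: "i \<in> idx2 N \<Longrightarrow> j \<in> idx2 N \<Longrightarrow> mult2 N (Gmat N s) (Fmat N s) i j = one2 i j"
proof -
  assume i: "i \<in> idx2 N" and j: "j \<in> idx2 N"
  obtain i1 i2 where ii: "i = (i1, i2)" by (cases i)
  obtain j1 j2 where jj: "j = (j1, j2)" by (cases j)
  have i': "(i1, i2) \<in> idx2 N" using i ii by simp
  have s: "(i2, i1) \<in> idx2 N" using i' swap_idx2 by auto
  have "mult2 N (Gmat N s) (Fmat N s) (i1, i2) j = 1 * Fmat N s (i1, i2) j + (cc (xcoord N s) i1 i2) * Fmat N s (i2, i1) j"
    by (rule mult2_sparse[where A="Gmat N s" and i="(i1,i2)", OF i' s G_row[OF i']])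
  also have "\<dots> = one2 (i1, i2) (j1, j2)"
    unfolding jj F_row[OF i'] F_row[OF s] one2_def
    using cc_prod[of "xcoord N s" i1 i2]
    by (cases "j1 = i1"; cases "j2 = i2"; cases "j1 = i2"; cases "j2 = i1") (simp_all add: algebra_simps)
  finally show ?thesis unfolding ii jj .
qed

lemma mult2_assoc: "mult2 N (mult2 N A B) C = mult2 N A (mult2 N B C)"
proof (intro ext)
  fix i j
  have "(\<Sum>k\<in>idx2 N. (\<Sum>l\<in>idx2 N. A i l * B l k) * C k j) = (\<Sum>k\<in>idx2 N. \<Sum>l\<in>idx2 N. A i l * B l k * C k j)"
    by (simp add: sum_distrib_right)
  also have "\<dots> = (\<Sum>l\<in>idx2 N. \<Sum>k\<in>idx2 N. A i l * B l k * C k j)" by (rule sum.swap)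
  also have "\<dots> = (\<Sum>l\<in>idx2 N. A i l * (\<Sum>k\<in>idx2 N. B l k * C k j))" by (simp add: sum_distrib_left mult.assoc)
  finally show "mult2 N (mult2 N A B) C i j = mult2 N A (mult2 N B C) i j" unfolding mult2_def .
qed

lemma inv_unique:
  assumes zB: "\<forall>i j. (i \<notin> idx2 N \<or> j \<notin> idx2 N) \<longrightarrow> B i j = 0"
    and zC: "\<forall>i j. (i \<notin> idx2 N \<or> j \<notin> idx2 N) \<longrightarrow> C i j = 0"
    and BA: "\<forall>i\<in>idx2 N. \<forall>j\<in>idx2 N. mult2 N B A i j = one2 i j"
    and AC: "\<forall>i\<in>idx2 N. \<forall>j\<in>idx2 N. mult2 N A C i j = one2 i j"
  shows "B = C"
proof (intro ext)
  fix i j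
  show "B i j = C i j"
  proof (cases "i \<in> idx2 N \<and> j \<in> idx2 N")
    case False
    then have "i \<notin> idx2 N \<or> j \<notin> idx2 N" by blast
    then have "B i j = 0" "C i j = 0" using zB zC by blast+
    then show ?thesis by simp
  next
    case True
    have "B i j = (\<Sum>l\<in>idx2 N. if j = l then B i l else 0)"
      using True by (simp add: sum.delta idx2_def)
    also have "\<dots> = (\<Sum>l\<in>idx2 N. B i l * one2 l j)"
      by (intro sum.cong) (auto simp: one2_def)
    also have "\<dots> = mult2 N B (mult2 N A C) i j"
      unfolding mult2_def[of N B "mult2 N A C"] using AC True by (intro sum.cong) auto
    also have "\<dots> = mult2 N (mult2 N B A) C i j" by (simp add: mult2_assoc)
    also have "\<dots> = (\<Sum>l\<in>idx2 N. one2 i l * C l j)"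
      unfolding mult2_def[of N "mult2 N B A" C] using BA True by (intro sum.cong) auto
    also have "\<dots> = (\<Sum>l\<in>idx2 N. if i = l then C l j else 0)"
      by (intro sum.cong) (auto simp: one2_def)
    also have "\<dots> = C i j"
      using True by (simp add: sum.delta idx2_def)
    finally show ?thesis .
  qed
qed

lemma inv2_F: "inv2 N (Fmat N s) = Gmat N s"
  unfolding inv2_def
proof (rule the_equality)
  show "(\<forall>i j. (i \<notin> idx2 N \<or> j \<notin> idx2 N) \<longrightarrow> Gmat N s i j = 0) \<and>
    (\<forall>i\<in>idx2 N. \<forall>j\<in>idx2 N. mult2 N (Fmat N s) (Gmat N s) i j = one2 i j \<and> mult2 N (Gmat N s) (Fmat N s) i j = one2 i j)"
    using FG GF by (auto simp: Gmat_def)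
next
  fix B assume h: "(\<forall>i j. (i \<notin> idx2 N \<or> j \<notin> idx2 N) \<longrightarrow> B i j = 0) \<and>
    (\<forall>i\<in>idx2 N. \<forall>j\<in>idx2 N. mult2 N (Fmat N s) B i j = one2 i j \<and> mult2 N B (Fmat N s) i j = one2 i j)"
  show "B = Gmat N s"
    by (rule inv_unique[where A="Fmat N s"]) (use h FG in \<open>auto simp: Gmat_def\<close>)
qed


lemma F21_row:
  assumes i: "(i1, i2) \<in> idx2 N"
  shows "mult2 N perm2 (mult2 N (Fmat N s) perm2) (i1, i2) k =
    (if k = (i1, i2) then 1 else 0) + (if k = (i2, i1) then - cc (xcoord N s) i2 i1 else 0)"
proof -
  have sw: "(i2, i1) \<in> idx2 N" using i swap_idx2 by auto
  obtain k1 k2 where kk: "k = (k1, k2)" by (cases k)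
  have "mult2 N perm2 (mult2 N (Fmat N s) perm2) (i1, i2) k = 0 * mult2 N (Fmat N s) perm2 (i1, i2) k
     + 1 * mult2 N (Fmat N s) perm2 (i2, i1) k"
    by (rule mult2_sparse[where A=perm2 and i="(i1,i2)", OF i sw P_row])
  also have "mult2 N (Fmat N s) perm2 (i2, i1) k = 1 * perm2 (i2, i1) k + (- cc (xcoord N s) i2 i1) * perm2 (i1, i2) k"
    by (rule mult2_sparse[where A="Fmat N s" and i="(i2,i1)", OF sw i F_row[OF sw]])
  finally show ?thesis unfolding kk perm2_def
    by (cases "k1 = i1"; cases "k2 = i2"; cases "k1 = i2"; cases "k2 = i1") simp_all
qed

lemma F21_out:
  assumes i: "i \<notin> idx2 N"
  shows "mult2 N perm2 X i k = 0"
  unfolding mult2_def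
proof (rule sum.neutral, intro ballI)
  fix l assume l: "l \<in> idx2 N"
  obtain i1 i2 where ii: "i = (i1, i2)" by (cases i)
  obtain l1 l2 where ll: "l = (l1, l2)" by (cases l)
  have "perm2 i l = 0" using i l unfolding ii ll perm2_def idx2_def by auto
  then show "perm2 i l * X l k = 0" by simp
qed

lemma Rmat_eq:
  "Rmat N s (i1, i2) (j1, j2) = (if (i1, i2) \<in> idx2 N \<and> (j1, j2) \<in> idx2 N then
     (if (j1, j2) = (i1, i2) then ra (xcoord N s) i1 i2 else 0) +
     (if (j1, j2) = (i2, i1) then rb (xcoord N s) i1 i2 else 0) else 0)"
proof (cases "(i1, i2) \<in> idx2 N")
  case False
  then show ?thesis unfolding Rmat_def mult2_def[of N "mult2 N perm2 _"] by (simp add: F21_out)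
next
  case True
  have sw: "(i2, i1) \<in> idx2 N" using True swap_idx2 by auto
  have "Rmat N s (i1, i2) (j1, j2) = 1 * Gmat N s (i1, i2) (j1, j2) + (- cc (xcoord N s) i2 i1) * Gmat N s (i2, i1) (j1, j2)"
    unfolding Rmat_def inv2_F
    by (rule mult2_sparse[where A="mult2 N perm2 (mult2 N (Fmat N s) perm2)" and i="(i1,i2)", OF True sw F21_row[OF True]])
  also have "\<dots> = (if (j1, j2) = (i1, i2) then ra (xcoord N s) i1 i2 else 0) +
     (if (j1, j2) = (i2, i1) then rb (xcoord N s) i1 i2 else 0)"
    unfolding G_row[OF True] G_row[OF sw] ra_def rb_def
    using cc_prod[of "xcoord N s" i1 i2]
    by (cases "j1 = i1"; cases "j2 = i2"; cases "j1 = i2"; cases "j2 = i1") (simp_all add: power2_eq_square algebra_simps)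
  finally show ?thesis using True sw by (auto simp: idx2_def)
qed



definition xs :: "(nat \<Rightarrow> complex) \<Rightarrow> nat \<Rightarrow> nat \<Rightarrow> complex" where
  "xs X r p = X p + 2 * (if p = r then 1 else 0)"

type_synonym t3 = "nat \<times> nat \<times> nat"

definition LHS :: "(nat \<Rightarrow> complex) \<Rightarrow> t3 \<Rightarrow> t3 \<Rightarrow> complex" where
  "LHS X i j = (let
     Cj = (\<lambda>(l1,l2,l3). (if j = (l1,l2,l3) then ra (xs X l1) l2 l3 else 0) + (if j = (l1,l3,l2) then rb (xs X l1) l2 l3 else 0));
     BCj = (\<lambda>(k1,k2,k3). ra X k1 k3 * Cj (k1,k2,k3) + rb X k1 k3 * Cj (k3,k2,k1))
   in case i of (i1,i2,i3) \<Rightarrow> ra (xs X i3) i1 i2 * BCj (i1,i2,i3) + rb (xs X i3) i1 i2 * BCj (i2,i1,i3))"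

definition RHS :: "(nat \<Rightarrow> complex) \<Rightarrow> t3 \<Rightarrow> t3 \<Rightarrow> complex" where
  "RHS X i j = (let
     Cj = (\<lambda>(l1,l2,l3). (if j = (l1,l2,l3) then ra X l1 l2 else 0) + (if j = (l2,l1,l3) then rb X l1 l2 else 0));
     BCj = (\<lambda>(k1,k2,k3). ra (xs X k2) k1 k3 * Cj (k1,k2,k3) + rb (xs X k2) k1 k3 * Cj (k3,k2,k1))
   in case i of (i1,i2,i3) \<Rightarrow> ra X i2 i3 * BCj (i1,i2,i3) + rb X i2 i3 * BCj (i1,i3,i2))"

lemma core:
  assumes g: "\<forall>p\<in>{a,b,c}. \<forall>q\<in>{a,b,c}. p \<noteq> q \<longrightarrow> X p \<noteq> X q \<and> X p + 2 \<noteq> X q"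
  shows "LHS X (a,b,c) j = RHS X (a,b,c) j"
  using g
  apply (rule_tac linorder_cases[of a b]; rule_tac linorder_cases[of b c]; rule_tac linorder_cases[of a c])
  apply (cases "j = (a,b,c)"; cases "j = (b,a,c)"; cases "j = (a,c,b)"; cases "j = (c,b,a)"; cases "j = (b,c,a)"; cases "j = (c,a,b)")
  apply (simp_all add: LHS_def RHS_def ra_def rb_def cc_def xs_def)
  apply (simp_all add: divide_simps)
  apply (simp_all add: algebra_simps power2_eq_square)
  apply auto
  done

lemma cc_shift:
  assumes N: "N \<ge> 2" and r: "r \<in> {1..N}" and p: "p \<in> {1..N}" and q: "q \<in> {1..N}"
  shows "cc (xcoord N (shift N s r)) p q = cc (xs (xcoord N s) r) p q"
proof -
  have "xcoord N (shift N s r) p - xcoord N (shift N s r) q = xs (xcoord N s) r p - xs (xcoord N s) r q"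
    unfolding xshift[OF N p r, of s] xshift[OF N q r, of s] xs_def by simp
  then show ?thesis unfolding cc_def by simp
qed

lemma ra_shift:
  assumes "N \<ge> 2" "r \<in> {1..N}" "p \<in> {1..N}" "q \<in> {1..N}"
  shows "ra (xcoord N (shift N s r)) p q = ra (xs (xcoord N s) r) p q"
  using cc_shift[OF assms] cc_shift[OF assms(1,2,4,3)] by (simp add: ra_def)

lemma rb_shift:
  assumes "N \<ge> 2" "r \<in> {1..N}" "p \<in> {1..N}" "q \<in> {1..N}"
  shows "rb (xcoord N (shift N s r)) p q = rb (xs (xcoord N s) r) p q"
  using cc_shift[OF assms] cc_shift[OF assms(1,2,4,3)] by (simp add: rb_def)

lemma mult3_sparse:
  assumes "p \<in> idx3 N" "q \<in> idx3 N" "\<And>k. A i k = (if k = p then \<alpha> else 0) + (if k = q then \<beta> else 0)"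
  shows "mult3 N A B i j = \<alpha> * B p j + \<beta> * B q j"
  unfolding mult3_def using assms by (intro sum_sparse) (auto simp: idx3_def)

lemma mult3_assoc: "mult3 N (mult3 N A B) C = mult3 N A (mult3 N B C)"
proof (intro ext)
  fix i j
  have "(\<Sum>k\<in>idx3 N. (\<Sum>l\<in>idx3 N. A i l * B l k) * C k j) = (\<Sum>k\<in>idx3 N. \<Sum>l\<in>idx3 N. A i l * B l k * C k j)"
    by (simp add: sum_distrib_right)
  also have "\<dots> = (\<Sum>l\<in>idx3 N. \<Sum>k\<in>idx3 N. A i l * B l k * C k j)" by (rule sum.swap)
  also have "\<dots> = (\<Sum>l\<in>idx3 N. A i l * (\<Sum>k\<in>idx3 N. B l k * C k j))" by (simp add: sum_distrib_left mult.assoc)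
  finally show "mult3 N (mult3 N A B) C i j = mult3 N A (mult3 N B C) i j" unfolding mult3_def .
qed

context
  fixes N :: nat and s :: "nat \<Rightarrow> complex" assumes N: "N \<ge> 2"
begin

lemma R12_sh3_row:
  assumes i: "(i1,i2,i3) \<in> idx3 N"
  shows "R12_sh3 N s (i1,i2,i3) k =
   (if k = (i1,i2,i3) then ra (xs (xcoord N s) i3) i1 i2 else 0) + (if k = (i2,i1,i3) then rb (xs (xcoord N s) i3) i1 i2 else 0)"
proof -
  have m1: "i1 \<in> {1..N}" and m2: "i2 \<in> {1..N}" and m3: "i3 \<in> {1..N}" using i by (auto simp: idx3_def)
  obtain k1 k2 k3 where kk: "k = (k1,k2,k3)" by (cases k)
  show ?thesis unfolding kk R12_sh3_def prod.case Rmat_eq ra_shift[OF N m3 m1 m2] rb_shift[OF N m3 m1 m2]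
    using m1 m2 m3
    by (cases "k3 = i3"; cases "k1 = i1"; cases "k2 = i2"; cases "k1 = i2"; cases "k2 = i1"; cases "(k1,k2) \<in> idx2 N") (simp_all add: idx2_def)
qed

lemma R13_row:
  assumes i: "(i1,i2,i3) \<in> idx3 N"
  shows "R13 N s (i1,i2,i3) k =
   (if k = (i1,i2,i3) then ra (xcoord N s) i1 i3 else 0) + (if k = (i3,i2,i1) then rb (xcoord N s) i1 i3 else 0)"
proof -
  have m1: "i1 \<in> {1..N}" and m2: "i2 \<in> {1..N}" and m3: "i3 \<in> {1..N}" using i by (auto simp: idx3_def)
  obtain k1 k2 k3 where kk: "k = (k1,k2,k3)" by (cases k)
  show ?thesis unfolding kk R13_def prod.case Rmat_eq
    using m1 m2 m3
    by (cases "k2 = i2"; cases "k1 = i1"; cases "k3 = i3"; cases "k1 = i3"; cases "k3 = i1"; cases "(k1,k3) \<in> idx2 N") (simp_all add: idx2_def)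
qed

lemma R23_sh1_row:
  assumes i: "(i1,i2,i3) \<in> idx3 N"
  shows "R23_sh1 N s (i1,i2,i3) k =
   (if k = (i1,i2,i3) then ra (xs (xcoord N s) i1) i2 i3 else 0) + (if k = (i1,i3,i2) then rb (xs (xcoord N s) i1) i2 i3 else 0)"
proof -
  have m1: "i1 \<in> {1..N}" and m2: "i2 \<in> {1..N}" and m3: "i3 \<in> {1..N}" using i by (auto simp: idx3_def)
  obtain k1 k2 k3 where kk: "k = (k1,k2,k3)" by (cases k)
  show ?thesis unfolding kk R23_sh1_def prod.case Rmat_eq ra_shift[OF N m1 m2 m3] rb_shift[OF N m1 m2 m3]
    using m1 m2 m3
    by (cases "k1 = i1"; cases "k2 = i2"; cases "k3 = i3"; cases "k2 = i3"; cases "k3 = i2"; cases "(k2,k3) \<in> idx2 N") (simp_all add: idx2_def)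
qed

lemma R23_row:
  assumes i: "(i1,i2,i3) \<in> idx3 N"
  shows "R23 N s (i1,i2,i3) k =
   (if k = (i1,i2,i3) then ra (xcoord N s) i2 i3 else 0) + (if k = (i1,i3,i2) then rb (xcoord N s) i2 i3 else 0)"
proof -
  have m1: "i1 \<in> {1..N}" and m2: "i2 \<in> {1..N}" and m3: "i3 \<in> {1..N}" using i by (auto simp: idx3_def)
  obtain k1 k2 k3 where kk: "k = (k1,k2,k3)" by (cases k)
  show ?thesis unfolding kk R23_def prod.case Rmat_eq
    using m1 m2 m3
    by (cases "k1 = i1"; cases "k2 = i2"; cases "k3 = i3"; cases "k2 = i3"; cases "k3 = i2"; cases "(k2,k3) \<in> idx2 N") (simp_all add: idx2_def)
qed

lemma R13_sh2_row:
  assumes i: "(i1,i2,i3) \<in> idx3 N"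
  shows "R13_sh2 N s (i1,i2,i3) k =
   (if k = (i1,i2,i3) then ra (xs (xcoord N s) i2) i1 i3 else 0) + (if k = (i3,i2,i1) then rb (xs (xcoord N s) i2) i1 i3 else 0)"
proof -
  have m1: "i1 \<in> {1..N}" and m2: "i2 \<in> {1..N}" and m3: "i3 \<in> {1..N}" using i by (auto simp: idx3_def)
  obtain k1 k2 k3 where kk: "k = (k1,k2,k3)" by (cases k)
  show ?thesis unfolding kk R13_sh2_def prod.case Rmat_eq ra_shift[OF N m2 m1 m3] rb_shift[OF N m2 m1 m3]
    using m1 m2 m3
    by (cases "k2 = i2"; cases "k1 = i1"; cases "k3 = i3"; cases "k1 = i3"; cases "k3 = i1"; cases "(k1,k3) \<in> idx2 N") (simp_all add: idx2_def)
qed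

lemma R12_row:
  assumes i: "(i1,i2,i3) \<in> idx3 N"
  shows "R12 N s (i1,i2,i3) k =
   (if k = (i1,i2,i3) then ra (xcoord N s) i1 i2 else 0) + (if k = (i2,i1,i3) then rb (xcoord N s) i1 i2 else 0)"
proof -
  have m1: "i1 \<in> {1..N}" and m2: "i2 \<in> {1..N}" and m3: "i3 \<in> {1..N}" using i by (auto simp: idx3_def)
  obtain k1 k2 k3 where kk: "k = (k1,k2,k3)" by (cases k)
  show ?thesis unfolding kk R12_def prod.case Rmat_eq
    using m1 m2 m3
    by (cases "k3 = i3"; cases "k1 = i1"; cases "k2 = i2"; cases "k1 = i2"; cases "k2 = i1"; cases "(k1,k2) \<in> idx2 N") (simp_all add: idx2_def)
qed

end



lemma gen_core:
  assumes N: "N \<ge> 2" and g: "generic N s" and abc: "a \<in> {1..N}" "b \<in> {1..N}" "c \<in> {1..N}"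
  shows "\<forall>p\<in>{a,b,c}. \<forall>q\<in>{a,b,c}. p \<noteq> q \<longrightarrow> xcoord N s p \<noteq> xcoord N s q \<and> xcoord N s p + 2 \<noteq> xcoord N s q"
proof (intro ballI impI conjI)
  fix p q assume p: "p \<in> {a,b,c}" and q: "q \<in> {a,b,c}" and pq: "p \<noteq> q"
  have p': "p \<in> {1..N}" using p abc by auto
  have q': "q \<in> {1..N}" using q abc by auto
  show "xcoord N s p \<noteq> xcoord N s q" using g p' q' pq unfolding generic_def by blast
  have "shift N s p \<in> insert s (shift N s ` {1..N})" using p' by blast
  then have "xcoord N (shift N s p) p \<noteq> xcoord N (shift N s p) q" using g p' q' pq unfolding generic_def by blast
  then show "xcoord N s p + 2 \<noteq> xcoord N s q"
    unfolding xshift[OF N p' p'] xshift[OF N q' p'] using pq by simp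
qed

lemma perms_idx3:
  assumes "(i1,i2,i3) \<in> idx3 N"
  shows "(i2,i1,i3) \<in> idx3 N" "(i3,i2,i1) \<in> idx3 N" "(i1,i3,i2) \<in> idx3 N"
    "(i2,i3,i1) \<in> idx3 N" "(i3,i1,i2) \<in> idx3 N"
  using assms by (auto simp: idx3_def)

lemma lhs_eq:
  assumes N: "N \<ge> 2" and i: "i \<in> idx3 N"
  shows "mult3 N (mult3 N (R12_sh3 N s) (R13 N s)) (R23_sh1 N s) i j = LHS (xcoord N s) i j"
proof -
  obtain i1 i2 i3 where ii: "i = (i1,i2,i3)" by (cases i)
  have i': "(i1,i2,i3) \<in> idx3 N" using i ii by simp
  note P = perms_idx3[OF i']
  have BC: "mult3 N (R13 N s) (R23_sh1 N s) (k1,k2,k3) j =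
     ra (xcoord N s) k1 k3 * R23_sh1 N s (k1,k2,k3) j + rb (xcoord N s) k1 k3 * R23_sh1 N s (k3,k2,k1) j"
    if k: "(k1,k2,k3) \<in> idx3 N" for k1 k2 k3
    by (rule mult3_sparse[where A="R13 N s" and i="(k1,k2,k3)", OF k perms_idx3(2)[OF k] R13_row[OF N k]])
  have "mult3 N (mult3 N (R12_sh3 N s) (R13 N s)) (R23_sh1 N s) i j
     = mult3 N (R12_sh3 N s) (mult3 N (R13 N s) (R23_sh1 N s)) (i1,i2,i3) j"
    by (simp add: mult3_assoc ii)
  also have "\<dots> = ra (xs (xcoord N s) i3) i1 i2 * mult3 N (R13 N s) (R23_sh1 N s) (i1,i2,i3) j
      + rb (xs (xcoord N s) i3) i1 i2 * mult3 N (R13 N s) (R23_sh1 N s) (i2,i1,i3) j"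
    by (rule mult3_sparse[where A="R12_sh3 N s" and i="(i1,i2,i3)", OF i' P(1) R12_sh3_row[OF N i']])
  also have "\<dots> = LHS (xcoord N s) (i1,i2,i3) j"
    unfolding BC[OF i'] BC[OF P(1)]
      R23_sh1_row[OF N i'] R23_sh1_row[OF N P(1)] R23_sh1_row[OF N P(2)] R23_sh1_row[OF N P(3)] R23_sh1_row[OF N P(4)] R23_sh1_row[OF N P(5)]
    unfolding LHS_def Let_def prod.case ..
  finally show ?thesis unfolding ii .
qed

lemma rhs_eq:
  assumes N: "N \<ge> 2" and i: "i \<in> idx3 N"
  shows "mult3 N (mult3 N (R23 N s) (R13_sh2 N s)) (R12 N s) i j = RHS (xcoord N s) i j"
proof -
  obtain i1 i2 i3 where ii: "i = (i1,i2,i3)" by (cases i)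
  have i': "(i1,i2,i3) \<in> idx3 N" using i ii by simp
  note P = perms_idx3[OF i']
  have BC: "mult3 N (R13_sh2 N s) (R12 N s) (k1,k2,k3) j =
     ra (xs (xcoord N s) k2) k1 k3 * R12 N s (k1,k2,k3) j + rb (xs (xcoord N s) k2) k1 k3 * R12 N s (k3,k2,k1) j"
    if k: "(k1,k2,k3) \<in> idx3 N" for k1 k2 k3
    by (rule mult3_sparse[where A="R13_sh2 N s" and i="(k1,k2,k3)", OF k perms_idx3(2)[OF k] R13_sh2_row[OF N k]])
  have "mult3 N (mult3 N (R23 N s) (R13_sh2 N s)) (R12 N s) i j
     = mult3 N (R23 N s) (mult3 N (R13_sh2 N s) (R12 N s)) (i1,i2,i3) j"
    by (simp add: mult3_assoc ii)
  also have "\<dots> = ra (xcoord N s) i2 i3 * mult3 N (R13_sh2 N s) (R12 N s) (i1,i2,i3) j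
      + rb (xcoord N s) i2 i3 * mult3 N (R13_sh2 N s) (R12 N s) (i1,i3,i2) j"
    by (rule mult3_sparse[where A="R23 N s" and i="(i1,i2,i3)", OF i' P(3) R23_row[OF N i']])
  also have "\<dots> = RHS (xcoord N s) (i1,i2,i3) j"
    unfolding BC[OF i'] BC[OF P(3)]
      R12_row[OF N i'] R12_row[OF N P(1)] R12_row[OF N P(2)] R12_row[OF N P(3)] R12_row[OF N P(4)] R12_row[OF N P(5)]
    unfolding RHS_def Let_def prod.case ..
  finally show ?thesis unfolding ii .
qed

theorem mainTheorem1:
  fixes N :: nat and s :: "nat \<Rightarrow> complex"
  assumes "N \<ge> 2" and "generic N s"
  shows "(\<forall>i1\<in>{1..N}. \<forall>i2\<in>{1..N}. \<forall>j1\<in>{1..N}. \<forall>j2\<in>{1..N}.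
            Rmat N s (i1, i2) (j1, j2) =
              (if i1 = i2 \<and> j1 = i1 \<and> j2 = i1 then 1
               else if i1 \<noteq> i2 \<and> j1 = i1 \<and> j2 = i2 then
                 (if i2 > i1 then 1 else 1 - 4 / (xcoord N s i1 - xcoord N s i2)\<^sup>2)
               else if i1 \<noteq> i2 \<and> j1 = i2 \<and> j2 = i1 then
                 2 / (xcoord N s i1 - xcoord N s i2)
               else 0))
       \<and> (\<forall>i\<in>idx3 N. \<forall>j\<in>idx3 N.
            mult3 N (mult3 N (R12_sh3 N s) (R13 N s)) (R23_sh1 N s) i j =
            mult3 N (mult3 N (R23 N s) (R13_sh2 N s)) (R12 N s) i j)"
proof (intro conjI ballI)
  fix i1 i2 j1 j2 assume h: "i1 \<in> {1..N}" "i2 \<in> {1..N}" "j1 \<in> {1..N}" "j2 \<in> {1..N}"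
  have sq: "(xcoord N s i2 - xcoord N s i1)\<^sup>2 = (xcoord N s i1 - xcoord N s i2)\<^sup>2"
    by (simp add: power2_commute)
  have m: "(i1, i2) \<in> idx2 N" "(j1, j2) \<in> idx2 N" using h by (auto simp: idx2_def)
  show "Rmat N s (i1, i2) (j1, j2) =
              (if i1 = i2 \<and> j1 = i1 \<and> j2 = i1 then 1
               else if i1 \<noteq> i2 \<and> j1 = i1 \<and> j2 = i2 then
                 (if i2 > i1 then 1 else 1 - 4 / (xcoord N s i1 - xcoord N s i2)\<^sup>2)
               else if i1 \<noteq> i2 \<and> j1 = i2 \<and> j2 = i1 then
                 2 / (xcoord N s i1 - xcoord N s i2)
               else 0)"
    unfolding Rmat_eq using m
    by (cases "i1 = i2"; cases "j1 = i1"; cases "j2 = i2"; cases "j1 = i2"; cases "j2 = i1"; cases "i1 < i2")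
      (simp_all add: ra_def rb_def cc_def power_divide sq divide_simps)
next
  fix i j assume i: "i \<in> idx3 N" and j: "j \<in> idx3 N"
  obtain a b c where ii: "i = (a,b,c)" by (cases i)
  have abc: "a \<in> {1..N}" "b \<in> {1..N}" "c \<in> {1..N}" using i ii by (auto simp: idx3_def)
  show "mult3 N (mult3 N (R12_sh3 N s) (R13 N s)) (R23_sh1 N s) i j =
            mult3 N (mult3 N (R23 N s) (R13_sh2 N s)) (R12 N s) i j"
  proof -
    have "LHS (xcoord N s) (a,b,c) j = RHS (xcoord N s) (a,b,c) j" by (rule core[OF gen_core[OF assms abc]])
    then show ?thesis using lhs_eq[OF assms(1) i, of s j] rhs_eq[OF assms(1) i, of s j] ii by simp
  qed
qed

end
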